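(* Let $N$ be a finitely generated, semipositive binoid, $I$ an ideal of $N$ and $J$ an $N_+$-primary ideal of $N$. Then all pointed sets below are finite and $$\#\,N/J+\#\,(I\cap J)/(I+J)=\#\,I/(I+J)+\#\,(N/I)/(J+N/I).$$
   Context: A binoid $(N,+,0,\infty)$ is a commutative monoid $(N,+,0)$ with an element $\infty$ satisfying $a+\infty=\infty$ for all $a\in N$. Write $N^\times$ for the group of units of $N$ and $N_+=N\setminus N^\times$. $N$ is finitely generated if it is finitely generated as a monoid; semipositive if $N\neq\{\infty\}$ and $N^\times$ is finite. An ideal of $N$ is a nonempty subset $I\subseteq N$ with $I+N\subseteq I$ (so $\infty\in I$). An ideal $\mathfrak n$ is $N_+$-primary if $\mathfrak n\subseteq N_+$ and for every $a\in N_+$ there is $k\ge1$ with $ka\in\mathfrak n$. The residue class binoid $N/I$ is $(N\setminus I)\cup\{\infty\}$. An $N$-set is a pointed set $(S,p)$ with a map $N\times S\to S$, $(n,s)\mapsto n+s$, such that $(n+m)+s=n+(m+s)$, $0+s=s$, $\infty+s=p$ and $n+p=p$. $N$, its ideals and $N/I$ are $N$-sets with distinguished point $\infty$. For an ideal $J$ and an $N$-set $T$, $J+T=\{a+t:a\in J,t\in T\}$ is an $N$-subset; for an $N$-subset $S\subseteq T$ (a subset containing $p$ and stable under the action), the quotient $T/S$ is the $N$-set $(T\setminus S)\cup\{p\}$ (with $S$ collapsed to the point). In particular $I+J=\{a+b:a\in I,b\in J\}\subseteq I\cap J$. For a finite pointed set $S$ we write $\#S=|S|-1$. *)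

theory Defs
  imports Main
begin

definition binoid :: "'a set \<Rightarrow> ('a \<Rightarrow> 'a \<Rightarrow> 'a) \<Rightarrow> 'a \<Rightarrow> 'a \<Rightarrow> bool" where
  "binoid N f z w \<longleftrightarrow>
     z \<in> N \<and> w \<in> N \<and>
     (\<forall>a\<in>N. \<forall>b\<in>N. f a b \<in> N) \<and>
     (\<forall>a\<in>N. \<forall>b\<in>N. \<forall>c\<in>N. f (f a b) c = f a (f b c)) \<and>
     (\<forall>a\<in>N. \<forall>b\<in>N. f a b = f b a) \<and>
     (\<forall>a\<in>N. f z a = a) \<and>
     (\<forall>a\<in>N. f a w = w)"

inductive_set gen_monoid :: "('a \<Rightarrow> 'a \<Rightarrow> 'a) \<Rightarrow> 'a \<Rightarrow> 'a set \<Rightarrow> 'a set"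
  for f z G where
  gen_zero: "z \<in> gen_monoid f z G"
| gen_base: "g \<in> G \<Longrightarrow> g \<in> gen_monoid f z G"
| gen_add: "a \<in> gen_monoid f z G \<Longrightarrow> b \<in> gen_monoid f z G \<Longrightarrow> f a b \<in> gen_monoid f z G"

definition fin_gen :: "'a set \<Rightarrow> ('a \<Rightarrow> 'a \<Rightarrow> 'a) \<Rightarrow> 'a \<Rightarrow> bool" where
  "fin_gen N f z \<longleftrightarrow> (\<exists>G. finite G \<and> G \<subseteq> N \<and> gen_monoid f z G = N)"

definition units :: "'a set \<Rightarrow> ('a \<Rightarrow> 'a \<Rightarrow> 'a) \<Rightarrow> 'a \<Rightarrow> 'a set" where
  "units N f z = {a \<in> N. \<exists>b\<in>N. f a b = z}"

definition nonunits :: "'a set \<Rightarrow> ('a \<Rightarrow> 'a \<Rightarrow> 'a) \<Rightarrow> 'a \<Rightarrow> 'a set" where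
  "nonunits N f z = N - units N f z"

definition semipositive :: "'a set \<Rightarrow> ('a \<Rightarrow> 'a \<Rightarrow> 'a) \<Rightarrow> 'a \<Rightarrow> 'a \<Rightarrow> bool" where
  "semipositive N f z w \<longleftrightarrow> N \<noteq> {w} \<and> finite (units N f z)"

definition binoid_ideal :: "'a set \<Rightarrow> ('a \<Rightarrow> 'a \<Rightarrow> 'a) \<Rightarrow> 'a set \<Rightarrow> bool" where
  "binoid_ideal N f I \<longleftrightarrow> I \<noteq> {} \<and> I \<subseteq> N \<and> (\<forall>a\<in>I. \<forall>n\<in>N. f a n \<in> I)"

definition nsmul :: "('a \<Rightarrow> 'a \<Rightarrow> 'a) \<Rightarrow> 'a \<Rightarrow> nat \<Rightarrow> 'a \<Rightarrow> 'a" where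
  "nsmul f z k a = ((f a) ^^ k) z"

definition primary_ideal :: "'a set \<Rightarrow> ('a \<Rightarrow> 'a \<Rightarrow> 'a) \<Rightarrow> 'a \<Rightarrow> 'a set \<Rightarrow> bool" where
  "primary_ideal N f z J \<longleftrightarrow> binoid_ideal N f J \<and> J \<subseteq> nonunits N f z \<and>
     (\<forall>a\<in>nonunits N f z. \<exists>k\<ge>1. nsmul f z k a \<in> J)"

text \<open>Residue class binoid N/I as a pointed set (point w), with its N-action.\<close>
definition resid :: "'a set \<Rightarrow> 'a set \<Rightarrow> 'a \<Rightarrow> 'a set" where
  "resid N I w = (N - I) \<union> {w}"

definition resid_act :: "('a \<Rightarrow> 'a \<Rightarrow> 'a) \<Rightarrow> 'a set \<Rightarrow> 'a \<Rightarrow> 'a \<Rightarrow> 'a \<Rightarrow> 'a" where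
  "resid_act f I w n s = (if f n s \<in> I then w else f n s)"

definition set_sum :: "('a \<Rightarrow> 'b \<Rightarrow> 'b) \<Rightarrow> 'a set \<Rightarrow> 'b set \<Rightarrow> 'b set" where
  "set_sum act J T = {act a t | a t. a \<in> J \<and> t \<in> T}"

text \<open>Quotient T/S of pointed sets with point p, and #S = |S| - 1.\<close>
definition pquot :: "'b set \<Rightarrow> 'b set \<Rightarrow> 'b \<Rightarrow> 'b set" where
  "pquot T S p = (T - S) \<union> {p}"

definition psize :: "'b set \<Rightarrow> nat" where
  "psize S = card S - 1"

end

theory Submission
  imports Defs Complex_Main
begin

lemma nat_mono_subseq:
  fixes s :: "nat \<Rightarrow> nat"
  shows "\<exists>\<psi>::nat\<Rightarrow>nat. strict_mono \<psi> \<and> (\<forall>i j. i \<le> j \<longrightarrow> s (\<psi> i) \<le> s (\<psi> j))"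
proof -
  from seq_monosub[of s] obtain g where g: "strict_mono g" "monoseq (\<lambda>n. s (g n))" by (elim exE conjE) blast
  show ?thesis
  proof (cases "\<forall>m. \<forall>n\<ge>m. s (g m) \<le> s (g n)")
    case True
    have "\<forall>i j. i \<le> j \<longrightarrow> s (g i) \<le> s (g j)" using True by simp
    then have "strict_mono g \<and> (\<forall>i j. i \<le> j \<longrightarrow> s (g i) \<le> s (g j))" using g(1) by simp
    then show ?thesis by blast
  next
    case False
    then have dec: "\<forall>m. \<forall>n\<ge>m. s (g n) \<le> s (g m)" using g(2) unfolding monoseq_def by (elim disjE) simp_all
    define v where "v = (LEAST v. v \<in> range (\<lambda>n. s (g n)))"
    have "v \<in> range (\<lambda>n. s (g n))" unfolding v_def by (rule LeastI) blast
    then obtain n0 where n0: "s (g n0) = v" by auto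
    have le: "\<And>n. v \<le> s (g n)" unfolding v_def by (rule Least_le) blast
    have const: "s (g n) = v" if "n \<ge> n0" for n
    proof -
      have "s (g n) \<le> s (g n0)" using dec that by simp
      then show ?thesis using le[of n] n0 by simp
    qed
    have sm: "strict_mono (\<lambda>i. g (i + n0))" using g(1) by (simp add: strict_mono_def)
    have "\<forall>i j. i \<le> j \<longrightarrow> s (g (i + n0)) \<le> s (g (j + n0))" using const by simp
    then have "strict_mono (\<lambda>i. g (i + n0)) \<and> (\<forall>i j. i \<le> j \<longrightarrow> s (g (i + n0)) \<le> s (g (j + n0)))" using sm by simp
    then show ?thesis by blast
  qed
qed

context
  fixes N :: "'a set" and f :: "'a \<Rightarrow> 'a \<Rightarrow> 'a" and z w :: 'a
  assumes B: "binoid N f z w"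
begin

lemma zN: "z \<in> N" and wN: "w \<in> N" and cl: "a \<in> N \<Longrightarrow> b \<in> N \<Longrightarrow> f a b \<in> N"
  and ass: "a \<in> N \<Longrightarrow> b \<in> N \<Longrightarrow> c \<in> N \<Longrightarrow> f (f a b) c = f a (f b c)"
  and com: "a \<in> N \<Longrightarrow> b \<in> N \<Longrightarrow> f a b = f b a"
  and zl: "a \<in> N \<Longrightarrow> f z a = a"
  and wr: "a \<in> N \<Longrightarrow> f a w = w"
  using B unfolding binoid_def by blast+

lemma zr: "a \<in> N \<Longrightarrow> f a z = a" using com[of a z] zl[of a] zN by simp

lemma lcom: "a \<in> N \<Longrightarrow> b \<in> N \<Longrightarrow> c \<in> N \<Longrightarrow> f a (f b c) = f b (f a c)"
proof -
  assume h: "a \<in> N" "b \<in> N" "c \<in> N"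
  have "f a (f b c) = f (f a b) c" using ass h by simp
  also have "\<dots> = f (f b a) c" using com h by simp
  also have "\<dots> = f b (f a c)" using ass h by simp
  finally show ?thesis .
qed

lemma swap: "a \<in> N \<Longrightarrow> b \<in> N \<Longrightarrow> c \<in> N \<Longrightarrow> d \<in> N \<Longrightarrow> f (f a b) (f c d) = f (f a c) (f b d)"
proof -
  assume h: "a \<in> N" "b \<in> N" "c \<in> N" "d \<in> N"
  have "f (f a b) (f c d) = f a (f b (f c d))" using ass h cl by simp
  also have "\<dots> = f a (f c (f b d))" using lcom[of b c d] h by simp
  also have "\<dots> = f (f a c) (f b d)" using ass[of a c "f b d"] h cl by simp
  finally show ?thesis .
qed

lemma ns0: "nsmul f z 0 a = z" by (simp add: nsmul_def)
lemma nsS: "nsmul f z (Suc n) a = f a (nsmul f z n a)" by (simp add: nsmul_def)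

lemma nsN: "a \<in> N \<Longrightarrow> nsmul f z n a \<in> N"
proof (induction n)
  case 0 then show ?case by (simp add: ns0 zN)
next
  case (Suc n) then show ?case unfolding nsS by (blast intro: cl)
qed

lemma ns1: "a \<in> N \<Longrightarrow> nsmul f z 1 a = a"
proof -
  assume "a \<in> N"
  then show ?thesis using nsS[of 0 a] ns0[of a] zr[of a] by simp
qed

lemma nsadd: "a \<in> N \<Longrightarrow> nsmul f z (m + n) a = f (nsmul f z m a) (nsmul f z n a)"
proof (induction m)
  case 0 then show ?case using zl[OF nsN[OF 0, of n]] by (simp only: ns0 add_0)
next
  case (Suc m)
  have "nsmul f z (Suc m + n) a = f a (nsmul f z (m + n) a)" by (simp only: nsS add_Suc)
  also have "\<dots> = f a (f (nsmul f z m a) (nsmul f z n a))" using Suc by simp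
  also have "\<dots> = f (f a (nsmul f z m a)) (nsmul f z n a)"
    using ass[OF Suc.prems nsN[OF Suc.prems, of m] nsN[OF Suc.prems, of n]] by simp
  also have "\<dots> = f (nsmul f z (Suc m) a) (nsmul f z n a)" by (simp only: nsS)
  finally show ?case .
qed

lemma ns_unit: "g \<in> units N f z \<Longrightarrow> nsmul f z n g \<in> units N f z"
proof (induction n)
  case 0
  have "f z z = z" using zl[OF zN] .
  then show ?case unfolding ns0 units_def using zN by blast
next
  case (Suc n)
  from Suc.prems obtain b where b: "b \<in> N" "f g b = z" "g \<in> N" unfolding units_def by blast
  from Suc.IH[OF Suc.prems] obtain b' where b': "b' \<in> N" "f (nsmul f z n g) b' = z"
    unfolding units_def by blast
  have xN: "nsmul f z n g \<in> N" using nsN[OF b(3)] .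
  have "f (f g (nsmul f z n g)) (f b b') = f (f g b) (f (nsmul f z n g) b')"
    using swap[OF b(3) xN b(1) b'(1)] .
  also have "\<dots> = z" using b(2) b'(2) zl[OF zN] by simp
  finally have e: "f (f g (nsmul f z n g)) (f b b') = z" .
  have "f g (nsmul f z n g) \<in> N" "f b b' \<in> N" using cl b b' xN by blast+
  then show ?case unfolding units_def nsS using e by blast
qed

lemma gen_sub: assumes "G \<subseteq> N" shows "x \<in> gen_monoid f z G \<Longrightarrow> x \<in> N"
  by (induction rule: gen_monoid.induct) (use assms in \<open>auto simp: zN cl\<close>)

lemma gen_empty: "x \<in> gen_monoid f z {} \<Longrightarrow> x = z"
proof (induction rule: gen_monoid.induct)
  case (gen_add a b) then show ?case using zl[OF zN] by simp
qed simp_all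

lemma gen_decomp:
  assumes "insert g G \<subseteq> N" "x \<in> gen_monoid f z (insert g G)"
  shows "\<exists>n y. y \<in> gen_monoid f z G \<and> x = f (nsmul f z n g) y"
  using assms(2)
proof (induction rule: gen_monoid.induct)
  case gen_zero
  have "z = f (nsmul f z 0 g) z" using zl[OF zN] by (simp only: ns0)
  then show ?case by (intro exI[of _ 0] exI[of _ z] conjI gen_monoid.gen_zero)
next
  case (gen_base h)
  have gN: "g \<in> N" using assms(1) by auto
  show ?case
  proof (cases "h = g")
    case True
    have "g = f (nsmul f z 1 g) z" using ns1[OF gN] zr[OF gN] by simp
    then show ?thesis using True by (intro exI[of _ 1] exI[of _ z] conjI gen_monoid.gen_zero) simp
  next
    case False
    then have hG: "h \<in> G" using gen_base by auto
    then have "h = f (nsmul f z 0 g) h" using assms(1) zl[of h] by (simp add: ns0 subset_iff)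
    then show ?thesis by (intro exI[of _ 0] exI[of _ h] conjI gen_monoid.gen_base hG)
  qed
next
  case (gen_add a b)
  from gen_add.IH obtain n1 y1 n2 y2 where
    h: "y1 \<in> gen_monoid f z G" "a = f (nsmul f z n1 g) y1"
       "y2 \<in> gen_monoid f z G" "b = f (nsmul f z n2 g) y2" by blast
  have gN: "g \<in> N" using assms(1) by auto
  have GN: "G \<subseteq> N" using assms(1) by auto
  have y1N: "y1 \<in> N" and y2N: "y2 \<in> N" using gen_sub[OF GN] h(1,3) by blast+
  have "f a b = f (f (nsmul f z n1 g) (nsmul f z n2 g)) (f y1 y2)"
    unfolding h(2,4) using swap[OF nsN[OF gN] y1N nsN[OF gN] y2N] .
  also have "\<dots> = f (nsmul f z (n1 + n2) g) (f y1 y2)" by (subst nsadd[OF gN]) (rule refl)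
  finally have e: "f a b = f (nsmul f z (n1 + n2) g) (f y1 y2)" .
  have m: "f y1 y2 \<in> gen_monoid f z G" using gen_monoid.gen_add[OF h(1,3)] .
  show ?case by (rule exI[of _ "n1 + n2"], rule exI[of _ "f y1 y2"], rule conjI[OF m e])
qed

lemma dickson:
  fixes x :: "nat \<Rightarrow> 'a"
  assumes "finite G" "G \<subseteq> N"
  shows "(\<forall>i. x i \<in> gen_monoid f z G) \<Longrightarrow>
    \<exists>\<phi>::nat\<Rightarrow>nat. strict_mono \<phi> \<and> (\<forall>i j. i \<le> j \<longrightarrow> (\<exists>c\<in>N. x (\<phi> j) = f (x (\<phi> i)) c))"
  using assms
proof (induction G arbitrary: x rule: finite_induct)
  case empty
  then have "\<forall>i. x i = z" using gen_empty by blast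
  then have A: "\<forall>i j. i \<le> j \<longrightarrow> (\<exists>c\<in>N. x (id j) = f (x (id i)) c)"
    using zN zl[OF zN] by (intro allI impI bexI[of _ z]) simp_all
  have B: "strict_mono (id :: nat \<Rightarrow> nat)" by (simp add: strict_mono_def)
  show ?case by (rule exI[of _ "id::nat \<Rightarrow> nat"]) (use A B in \<open>simp add: strict_mono_def\<close>)
next
  case (insert g G)
  have gN: "g \<in> N" and GN: "G \<subseteq> N" using insert.prems by auto
  have xi: "\<forall>i. x i \<in> gen_monoid f z (insert g G)" and sub: "insert g G \<subseteq> N"
    using insert.prems by simp_all
  have ex: "\<exists>p. snd p \<in> gen_monoid f z G \<and> x i = f (nsmul f z (fst p) g) (snd p)" for i
  proof -
    from gen_decomp[OF sub xi[rule_format, of i]] obtain n0 y0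
      where h: "y0 \<in> gen_monoid f z G" "x i = f (nsmul f z n0 g) y0" by (elim exE conjE) blast
    show ?thesis by (rule exI[of _ "(n0, y0)"]) (simp only: h fst_conv snd_conv simp_thms)
  qed
  have "\<exists>p. \<forall>i. snd (p i) \<in> gen_monoid f z G \<and> x i = f (nsmul f z (fst (p i)) g) (snd (p i))"
    by (rule choice, rule allI, rule ex)
  then obtain p where p: "\<forall>i. snd (p i) \<in> gen_monoid f z G \<and> x i = f (nsmul f z (fst (p i)) g) (snd (p i))"
    by (elim exE) blast
  define n where "n = (\<lambda>i. fst (p i))"
  define y where "y = (\<lambda>i. snd (p i))"
  have ny: "\<And>i. y i \<in> gen_monoid f z G" "\<And>i. x i = f (nsmul f z (n i) g) (y i)"
    using p unfolding n_def y_def by blast+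
  from insert.IH[of y, OF allI[OF ny(1)] GN] obtain \<phi> :: "nat \<Rightarrow> nat" where
    phi0: "strict_mono \<phi>" "\<forall>i j. i \<le> j \<longrightarrow> (\<exists>c\<in>N. y (\<phi> j) = f (y (\<phi> i)) c)"
    by (elim exE conjE) blast
  have phi: "strict_mono \<phi>" "\<And>i j. i \<le> j \<Longrightarrow> \<exists>c\<in>N. y (\<phi> j) = f (y (\<phi> i)) c"
    using phi0 by simp_all
  from nat_mono_subseq[of "\<lambda>i. n (\<phi> i)"] obtain \<psi> :: "nat \<Rightarrow> nat" where
    psi0: "strict_mono \<psi>" "\<forall>i j. i \<le> j \<longrightarrow> n (\<phi> (\<psi> i)) \<le> n (\<phi> (\<psi> j))"
    by (elim exE conjE) blast
  have psi: "strict_mono \<psi>" "\<And>i j. i \<le> j \<Longrightarrow> n (\<phi> (\<psi> i)) \<le> n (\<phi> (\<psi> j))"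
    using psi0 by simp_all
  have "\<exists>c\<in>N. x (\<phi> (\<psi> j)) = f (x (\<phi> (\<psi> i))) c" if ij: "i \<le> j" for i j
  proof -
    have "\<psi> i \<le> \<psi> j" using psi(1) ij by (simp add: strict_mono_less_eq)
    then obtain c where c: "c \<in> N" "y (\<phi> (\<psi> j)) = f (y (\<phi> (\<psi> i))) c" using phi(2) by blast
    obtain d where d: "n (\<phi> (\<psi> j)) = n (\<phi> (\<psi> i)) + d" using psi(2)[OF ij] le_Suc_ex by blast
    have yN: "y (\<phi> (\<psi> i)) \<in> N" using gen_sub[OF GN ny(1)] .
    let ?a = "nsmul f z (n (\<phi> (\<psi> i))) g" and ?d = "nsmul f z d g" and ?y = "y (\<phi> (\<psi> i))"
    have aN: "?a \<in> N" and dN: "?d \<in> N" using nsN[OF gN] by blast+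
    have "x (\<phi> (\<psi> j)) = f (nsmul f z (n (\<phi> (\<psi> j))) g) (y (\<phi> (\<psi> j)))" using ny(2) .
    also have "\<dots> = f (f ?a ?d) (f ?y c)" using c(2) d nsadd[OF gN] by simp
    also have "\<dots> = f (f ?a ?y) (f ?d c)" using swap[OF aN dN yN c(1)] .
    also have "\<dots> = f (x (\<phi> (\<psi> i))) (f ?d c)" using ny(2)[of "\<phi> (\<psi> i)"] by simp
    finally show ?thesis using cl[OF dN c(1)] by blast
  qed
  moreover have "strict_mono (\<lambda>a. \<phi> (\<psi> a))" using phi(1) psi(1) by (simp add: strict_mono_def)
  ultimately show ?case by (intro exI[of _ "\<lambda>a. \<phi> (\<psi> a)"] conjI) auto
qed

lemma bounded:
  assumes "finite G" "G \<subseteq> N" "finite (units N f z)"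
  shows "\<exists>T. finite T \<and> (\<forall>x\<in>gen_monoid f z G. x \<in> T \<or>
     (\<exists>h\<in>G. h \<notin> units N f z \<and> (\<exists>c\<in>N. x = f (nsmul f z (K h) h) c)))"
  using assms(1,2)
proof (induction G rule: finite_induct)
  case empty
  then show ?case using gen_empty by (intro exI[of _ "{z}"]) auto
next
  case (insert g G)
  have gN: "g \<in> N" and GN: "G \<subseteq> N" using insert.prems by auto
  obtain T where T: "finite T" "\<And>x. x\<in>gen_monoid f z G \<Longrightarrow> x \<in> T \<or>
     (\<exists>h\<in>G. h \<notin> units N f z \<and> (\<exists>c\<in>N. x = f (nsmul f z (K h) h) c))"
    using insert.IH GN by blast
  define S where "S = units N f z \<union> (\<lambda>m. nsmul f z m g) ` {..<K g}"
  define T' where "T' = (\<lambda>(a,t). f a t) ` (S \<times> T)"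
  have "finite T'" unfolding T'_def S_def using T(1) assms(3) by auto
  moreover have "x \<in> T' \<or> (\<exists>h\<in>insert g G. h \<notin> units N f z \<and> (\<exists>c\<in>N. x = f (nsmul f z (K h) h) c))"
    if x: "x \<in> gen_monoid f z (insert g G)" for x
  proof -
    obtain n y where ny: "y \<in> gen_monoid f z G" "x = f (nsmul f z n g) y"
      using gen_decomp[OF insert.prems x] by blast
    have yN: "y \<in> N" using gen_sub[OF GN ny(1)] .
    from T(2)[OF ny(1)] show ?thesis
    proof
      assume yT: "y \<in> T"
      show ?thesis
      proof (cases "g \<in> units N f z")
        case True
        then have "nsmul f z n g \<in> S" using ns_unit unfolding S_def by blast
        then show ?thesis using yT ny(2) unfolding T'_def by force
      next
        case False
        show ?thesis
        proof (cases "n < K g")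
          case True
          then have "nsmul f z n g \<in> S" unfolding S_def by blast
          then show ?thesis using yT ny(2) unfolding T'_def by force
        next
          case nlt: False
          then obtain m where m: "n = K g + m" using le_Suc_ex not_less by blast
          have "x = f (nsmul f z (K g) g) (f (nsmul f z m g) y)"
            using ny(2) m nsadd[OF gN] ass nsN[OF gN] yN by simp
          then show ?thesis using False cl nsN[OF gN] yN by blast
        qed
      qed
    next
      assume "\<exists>h\<in>G. h \<notin> units N f z \<and> (\<exists>c\<in>N. y = f (nsmul f z (K h) h) c)"
      then obtain h c where hc: "h \<in> G" "h \<notin> units N f z" "c \<in> N" "y = f (nsmul f z (K h) h) c"
        by blast
      have hN: "h \<in> N" using hc GN by auto
      have "x = f (nsmul f z (K h) h) (f (nsmul f z n g) c)"
        using ny(2) hc(3,4) lcom nsN gN hN by simp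
      then show ?thesis using hc cl nsN[OF gN] by blast
    qed
  qed
  ultimately show ?case by blast
qed

end


lemma mem_set_sum: "x \<in> set_sum act J T \<longleftrightarrow> (\<exists>a\<in>J. \<exists>t\<in>T. x = act a t)"
  unfolding set_sum_def by blast

lemma psize_pquot: "finite (T - S) \<Longrightarrow> w \<in> S \<Longrightarrow> psize (pquot T S w) = card (T - S)"
proof -
  assume a: "finite (T - S)" "w \<in> S"
  have "pquot T S w = insert w (T - S)" unfolding pquot_def by blast
  moreover have "w \<notin> T - S" using a(2) by blast
  ultimately show ?thesis unfolding psize_def using a(1) by simp
qed

lemma finite_pquot: "finite (T - S) \<Longrightarrow> finite (pquot T S w)"
  unfolding pquot_def by simp

theorem mainTheorem15:
  fixes N :: "'a set" and f :: "'a \<Rightarrow> 'a \<Rightarrow> 'a" and z w :: 'a and I J :: "'a set"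
  assumes "binoid N f z w"
    and "fin_gen N f z"
    and "semipositive N f z w"
    and "binoid_ideal N f I"
    and "primary_ideal N f z J"
  shows "finite (pquot N J w)
    \<and> finite (pquot (I \<inter> J) (set_sum f I J) w)
    \<and> finite (pquot I (set_sum f I J) w)
    \<and> finite (pquot (resid N I w) (set_sum (resid_act f I w) J (resid N I w)) w)
    \<and> psize (pquot N J w) + psize (pquot (I \<inter> J) (set_sum f I J) w)
      = psize (pquot I (set_sum f I J) w)
        + psize (pquot (resid N I w) (set_sum (resid_act f I w) J (resid N I w)) w)"
proof -
  note B = assms(1)
  from assms(2) obtain G where G: "finite G" "G \<subseteq> N" "gen_monoid f z G = N"
    unfolding fin_gen_def by blast
  have U: "finite (units N f z)" using assms(3) unfolding semipositive_def by blast
  have IN: "I \<subseteq> N" and Icl: "\<And>a n. a \<in> I \<Longrightarrow> n \<in> N \<Longrightarrow> f a n \<in> I" and Ine: "I \<noteq> {}"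
    using assms(4) unfolding binoid_ideal_def by blast+
  have JN: "J \<subseteq> N" and Jcl: "\<And>a n. a \<in> J \<Longrightarrow> n \<in> N \<Longrightarrow> f a n \<in> J" and Jne: "J \<noteq> {}"
    using assms(5) unfolding primary_ideal_def binoid_ideal_def by blast+
  have Jpow: "\<And>a. a \<in> nonunits N f z \<Longrightarrow> \<exists>k\<ge>1. nsmul f z k a \<in> J"
    using assms(5) unfolding primary_ideal_def by blast
  have wN: "w \<in> N" and zN: "z \<in> N" using B unfolding binoid_def by blast+
  have wI: "w \<in> I"
  proof -
    obtain a where a: "a \<in> I" using Ine by blast
    have "f a w \<in> I" using Icl[OF a wN] .
    moreover have "f a w = w" using wr[OF B] a IN by blast
    ultimately show ?thesis by simp
  qed
  have wJ: "w \<in> J"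
  proof -
    obtain a where a: "a \<in> J" using Jne by blast
    have "f a w \<in> J" using Jcl[OF a wN] .
    moreover have "f a w = w" using wr[OF B] a JN by blast
    ultimately show ?thesis by simp
  qed
  define K where "K h = (SOME k. nsmul f z k h \<in> J)" for h
  have KJ: "nsmul f z (K h) h \<in> J" if "h \<in> N" "h \<notin> units N f z" for h
  proof -
    have "h \<in> nonunits N f z" using that unfolding nonunits_def by blast
    then have "\<exists>k. nsmul f z k h \<in> J" using Jpow by blast
    then show ?thesis unfolding K_def by (rule someI_ex)
  qed
  obtain T where T: "finite T" "\<forall>x\<in>gen_monoid f z G. x \<in> T \<or>
     (\<exists>h\<in>G. h \<notin> units N f z \<and> (\<exists>c\<in>N. x = f (nsmul f z (K h) h) c))"
    using bounded[OF B G(1) G(2) U, of K] by blast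
  have "N - J \<subseteq> T"
  proof
    fix x assume x: "x \<in> N - J"
    then have "x \<in> gen_monoid f z G" using G(3) by blast
    then have "x \<in> T \<or> (\<exists>h\<in>G. h \<notin> units N f z \<and> (\<exists>c\<in>N. x = f (nsmul f z (K h) h) c))"
      using T(2) by blast
    then show "x \<in> T"
    proof
      assume "\<exists>h\<in>G. h \<notin> units N f z \<and> (\<exists>c\<in>N. x = f (nsmul f z (K h) h) c)"
      then obtain h c where hc: "h \<in> G" "h \<notin> units N f z" "c \<in> N" "x = f (nsmul f z (K h) h) c"
        by blast
      have hN: "h \<in> N" using hc(1) G(2) by blast
      have "f (nsmul f z (K h) h) c \<in> J" using Jcl[OF KJ[OF hN hc(2)] hc(3)] .
      then have "x \<in> J" using hc(4) by simp
      then show ?thesis using x by blast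
    qed
  qed
  then have F1: "finite (N - J)" using T(1) finite_subset by blast
  define SS where "SS = set_sum f I J"
  have SSsub: "SS \<subseteq> I \<inter> J"
  proof
    fix x assume "x \<in> SS"
    then obtain a b where ab: "a \<in> I" "b \<in> J" "x = f a b" unfolding SS_def mem_set_sum by blast
    have aN: "a \<in> N" and bN: "b \<in> N" using ab IN JN by blast+
    have "f a b \<in> I" using Icl[OF ab(1) bN] .
    moreover have "f a b = f b a" using com[OF B aN bN] .
    moreover have "f b a \<in> J" using Jcl[OF ab(2) aN] .
    ultimately show "x \<in> I \<inter> J" using ab(3) by simp
  qed
  have wSS: "w \<in> SS"
  proof -
    have "w = f w w" using wr[OF B wN] by simp
    then show ?thesis unfolding SS_def mem_set_sum using wI wJ by blast
  qed
  have F2: "finite (I - SS)"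
  proof (rule ccontr)
    assume inf: "infinite (I - SS)"
    from infinite_countable_subset[OF inf] obtain x :: "nat \<Rightarrow> 'a" where
      x: "inj x" "range x \<subseteq> I - SS" by blast
    have xg: "\<forall>i. x i \<in> gen_monoid f z G" using x(2) IN G(3) by blast
    from dickson[OF B G(1) G(2) xg] obtain \<phi> :: "nat \<Rightarrow> nat" where
      phi: "strict_mono \<phi>" "\<forall>i j. i \<le> j \<longrightarrow> (\<exists>c\<in>N. x (\<phi> j) = f (x (\<phi> i)) c)"
      by blast
    have "\<forall>n. \<exists>c. c \<in> N \<and> x (\<phi> n) = f (x (\<phi> 0)) c" using phi(2) by blast
    then have "\<exists>c. \<forall>n. c n \<in> N \<and> x (\<phi> n) = f (x (\<phi> 0)) (c n)" by (rule choice)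
    then obtain c where c0: "\<forall>n. c n \<in> N \<and> x (\<phi> n) = f (x (\<phi> 0)) (c n)" by blast
    have c: "\<And>n. c n \<in> N" "\<And>n. x (\<phi> n) = f (x (\<phi> 0)) (c n)" using c0 by blast+
    have x0: "x (\<phi> 0) \<in> I" using x(2) by blast
    have cNJ: "c n \<in> N - J" for n
    proof -
      have "c n \<notin> J"
      proof
        assume "c n \<in> J"
        then have "f (x (\<phi> 0)) (c n) \<in> SS" unfolding SS_def mem_set_sum using x0 by blast
        then have "x (\<phi> n) \<in> SS" using c(2)[of n] by simp
        then show False using x(2) by blast
      qed
      then show ?thesis using c(1) by blast
    qed
    have "inj c"
    proof (rule injI)
      fix m n assume "c m = c n"
      then have "x (\<phi> m) = x (\<phi> n)" using c(2)[of m] c(2)[of n] by simp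
      then have "\<phi> m = \<phi> n" using x(1) by (simp add: inj_eq)
      then show "m = n" using phi(1) by (simp add: strict_mono_eq)
    qed
    moreover have "range c \<subseteq> N - J" using cNJ by blast
    then have "finite (range c)" using F1 finite_subset by blast
    ultimately have "finite (UNIV :: nat set)" using finite_imageD by blast
    then show False by simp
  qed
  define RS where "RS = set_sum (resid_act f I w) J (resid N I w)"
  have wRS: "w \<in> RS"
  proof -
    have "f w w = w" using wr[OF B wN] .
    then have "w = resid_act f I w w w" unfolding resid_act_def by simp
    moreover have "w \<in> resid N I w" unfolding resid_def by blast
    ultimately show ?thesis unfolding RS_def mem_set_sum using wJ by blast
  qed
  have RSeq: "resid N I w - RS = (N - I) - J"
  proof (rule set_eqI, rule iffI)
    fix x assume x: "x \<in> resid N I w - RS"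
    then have xw: "x \<noteq> w" using wRS by blast
    then have xNI: "x \<in> N - I" using x unfolding resid_def by blast
    have "x \<notin> J"
    proof
      assume xJ: "x \<in> J"
      have xN: "x \<in> N" using xNI by blast
      have zI: "z \<notin> I"
      proof
        assume "z \<in> I"
        then have "f z x \<in> I" using Icl xN by blast
        then show False using zl[OF B xN] xNI by simp
      qed
      have zR: "z \<in> resid N I w" unfolding resid_def using zN zI by blast
      have "f x z = x" using zr[OF B xN] .
      then have "x = resid_act f I w x z" unfolding resid_act_def using xNI by simp
      then have "x \<in> RS" unfolding RS_def mem_set_sum using xJ zR by blast
      then show False using x by blast
    qed
    then show "x \<in> N - I - J" using xNI by blast
  next
    fix x assume x: "x \<in> N - I - J"
    have "x \<notin> RS"
    proof
      assume "x \<in> RS"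
      then obtain a t where at: "a \<in> J" "t \<in> resid N I w" "x = resid_act f I w a t"
        unfolding RS_def mem_set_sum by blast
      have tN: "t \<in> N" using at(2) wN unfolding resid_def by blast
      show False
      proof (cases "f a t \<in> I")
        case True
        then have "x = w" using at(3) unfolding resid_act_def by simp
        then show False using x wI by blast
      next
        case False
        then have "x = f a t" using at(3) unfolding resid_act_def by simp
        then have "x \<in> J" using Jcl[OF at(1) tN] by simp
        then show False using x by blast
      qed
    qed
    then show "x \<in> resid N I w - RS" using x unfolding resid_def by blast
  qed
  have F3: "finite (I \<inter> J - SS)" using F2 finite_subset[of "I \<inter> J - SS" "I - SS"] by blast
  have F4: "finite (N - I - J)" using F1 finite_subset[of "N - I - J" "N - J"] by blast
  have F5: "finite (resid N I w - RS)" using F4 RSeq by simp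
  have F6: "finite (I - J)" using F1 IN finite_subset[of "I - J" "N - J"] by blast
  have c1: "card (N - J) = card (I - J) + card (N - I - J)"
  proof -
    have "N - J = (I - J) \<union> (N - I - J)" using IN by blast
    moreover have "(I - J) \<inter> (N - I - J) = {}" by blast
    ultimately show ?thesis using F6 F4 card_Un_disjoint by metis
  qed
  have c2: "card (I - SS) = card (I - J) + card (I \<inter> J - SS)"
  proof -
    have "I - SS = (I - J) \<union> (I \<inter> J - SS)" using SSsub by blast
    moreover have "(I - J) \<inter> (I \<inter> J - SS) = {}" by blast
    ultimately show ?thesis using F6 F3 card_Un_disjoint by metis
  qed
  have p1: "psize (pquot N J w) = card (N - J)" using psize_pquot[OF F1 wJ] .
  have p2: "psize (pquot (I \<inter> J) SS w) = card (I \<inter> J - SS)" using psize_pquot[OF F3 wSS] .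
  have p3: "psize (pquot I SS w) = card (I - SS)" using psize_pquot[OF F2 wSS] .
  have p4: "psize (pquot (resid N I w) RS w) = card (N - I - J)"
    using psize_pquot[OF F5 wRS] RSeq by simp
  have fins: "finite (pquot N J w)" "finite (pquot (I \<inter> J) SS w)" "finite (pquot I SS w)"
    "finite (pquot (resid N I w) RS w)"
    using finite_pquot[OF F1] finite_pquot[OF F3] finite_pquot[OF F2] finite_pquot[OF F5] by blast+
  have "psize (pquot N J w) + psize (pquot (I \<inter> J) SS w)
      = psize (pquot I SS w) + psize (pquot (resid N I w) RS w)"
    unfolding p1 p2 p3 p4 c1 c2 by simp
  then show ?thesis using fins unfolding SS_def RS_def by blast
qed

end
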